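(* The Lagrange spectrum of $\mathbb{Q}((1/T))$ equals $$\{L(A): A=(g_i)_{i\in\mathbb{Z}} \text{ a doubly infinite sequence of polynomials } g_i\in\mathbb{Q}[T] \text{ with } \deg g_i\ge1\}.$$
   Context: $\mathbb{Q}((1/T))$ is the field of formal Laurent series in $1/T$ over $\mathbb{Q}$; $\deg$ of a nonzero series is the exponent of its leading term, $\deg0=-\infty$. For polynomials $c_0,c_1,\dots$ with $\deg c_j\ge1$ for $j\ge1$, $[c_0,c_1,c_2,\dots]=c_0+\cfrac{1}{c_1+\cfrac{1}{c_2+\cdots}}$ converges in $\mathbb{Q}((1/T))$. For a doubly infinite sequence $A=(g_i)_{i\in\mathbb{Z}}$ of polynomials of positive degree, $\lambda_i(A)=[g_i,g_{i+1},\dots]+[0,g_{i-1},g_{i-2},\dots]$ and $L(A)=\limsup_{|i|\to\infty}\deg\lambda_i(A)$ (the larger of the limsups as $i\to+\infty$ and $i\to-\infty$), a value in $\mathbb{Z}\cup\{\infty\}$. Lagrange spectrum: for $\alpha\notin\mathbb{Q}(T)$, $l(\alpha)\in\mathbb{Z}\cup\{\infty\}$ is the supremum of integers $k$ such that $\deg(\alpha-p/q)\le-2\deg q-k$ for infinitely many $p,q\in\mathbb{Q}[T]$, $q\neq0$; the Lagrange spectrum is $\{l(\alpha):\alpha\in\mathbb{Q}((1/T))\setminus\mathbb{Q}(T)\}$. *)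

theory Defs
  imports "HOL-Computational_Algebra.Polynomial" "HOL-Computational_Algebra.Formal_Laurent_Series"
          "HOL-Library.Extended_Real" "HOL-Library.Liminf_Limsup"
begin

text \<open>The field Q((1/T)) is modelled as rat fls, formal Laurent series in X = 1/T
  (finitely many negative powers of X, i.e. finitely many positive powers of T).
  Hence T corresponds to fls_X_inv and deg = - fls_subdegree.\<close>

definition poly_fls :: "rat poly \<Rightarrow> rat fls" where
  "poly_fls p = (\<Sum>i\<le>degree p. fls_const (coeff p i) * fls_X_inv ^ i)"

text \<open>Degree of a Laurent series in 1/T (exponent of T of the leading term).
  Only applied to nonzero series in the statement (deg 0 = -infinity is not needed).\<close>
definition ldeg :: "rat fls \<Rightarrow> int" where
  "ldeg a = - fls_subdegree a"

definition fls_conv :: "(nat \<Rightarrow> rat fls) \<Rightarrow> rat fls \<Rightarrow> bool" where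
  "fls_conv s a \<longleftrightarrow> (\<forall>N::int. eventually (\<lambda>n. s n - a = 0 \<or> ldeg (s n - a) \<le> - N) sequentially)"

fun cfrac_fin :: "(nat \<Rightarrow> rat fls) \<Rightarrow> nat \<Rightarrow> rat fls" where
  "cfrac_fin c 0 = c 0"
| "cfrac_fin c (Suc n) = c 0 + 1 / cfrac_fin (\<lambda>i. c (Suc i)) n"

definition cfrac :: "(nat \<Rightarrow> rat fls) \<Rightarrow> rat fls" where
  "cfrac c = (THE a. fls_conv (\<lambda>n. cfrac_fin c n) a)"

definition lam :: "(int \<Rightarrow> rat poly) \<Rightarrow> int \<Rightarrow> rat fls" where
  "lam A i = cfrac (\<lambda>n. poly_fls (A (i + int n)))
           + cfrac (\<lambda>n. if n = 0 then 0 else poly_fls (A (i - int n)))"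

definition Lval :: "(int \<Rightarrow> rat poly) \<Rightarrow> ereal" where
  "Lval A = max (Limsup at_top (\<lambda>i. ereal (of_int (ldeg (lam A i)))))
                (Limsup at_bot (\<lambda>i. ereal (of_int (ldeg (lam A i)))))"

definition rat_funs :: "rat fls set" where
  "rat_funs = {poly_fls p / poly_fls q | p q. q \<noteq> 0}"

definition lag :: "rat fls \<Rightarrow> ereal" where
  "lag \<alpha> = Sup {ereal (of_int k) | k::int.
     infinite {r. \<exists>p q. q \<noteq> 0 \<and> r = poly_fls p / poly_fls q \<and>
                   ldeg (\<alpha> - r) \<le> - 2 * int (degree q) - k}}"

definition lagrange_spectrum :: "ereal set" where
  "lagrange_spectrum = {lag \<alpha> | \<alpha>. \<alpha> \<notin> rat_funs}"

end

theory Submission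
  imports Defs
begin

unbundle fps_syntax



lemma poly_fls_nth: "poly_fls p $$ j = (if j \<le> 0 then coeff p (nat (-j)) else 0)"
proof -
  have "poly_fls p $$ j = (\<Sum>i\<le>degree p. coeff p i * (if j + int i = 0 then 1 else 0))"
    unfolding poly_fls_def fls_nth_sum fls_X_inv_power_conv_shift_1 by simp
  also have "\<dots> = (\<Sum>i\<le>degree p. if j + int i = 0 then coeff p i else 0)"
    by (rule sum.cong) auto
  also have "\<dots> = (\<Sum>i\<in>{i\<in>{..degree p}. j + int i = 0}. coeff p i)"
    by (rule sum.inter_filter[symmetric]) simp
  also have "\<dots> = (if j \<le> 0 then coeff p (nat (-j)) else 0)"
  proof (cases "j \<le> 0 \<and> nat (-j) \<le> degree p")
    case True
    then have "{i\<in>{..degree p}. j + int i = 0} = {nat (-j)}" by auto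
    then show ?thesis using True by simp
  next
    case False
    have e: "{i\<in>{..degree p}. j + int i = 0} = {}" using False by auto
    show ?thesis unfolding e sum.empty using False by (auto simp: coeff_eq_0)
  qed
  finally show ?thesis .
qed

lemma poly_fls_0 [simp]: "poly_fls 0 = 0"
  by (rule fls_eqI) (simp add: poly_fls_nth)

lemma poly_fls_pCons: "poly_fls (pCons a p) = fls_const a + fls_X_inv * poly_fls p"
proof (rule fls_eqI)
  fix j :: int
  consider "j = 0" | "j > 0" | "j < 0" by linarith
  then show "poly_fls (pCons a p) $$ j = (fls_const a + fls_X_inv * poly_fls p) $$ j"
  proof cases
    case 3
    then have e: "nat (- j) = Suc (nat (- j - 1))" by (simp add: nat_eq_iff)
    show ?thesis using 3 by (simp add: poly_fls_nth fls_X_inv_times_conv_shift e)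
  qed (auto simp: poly_fls_nth fls_X_inv_times_conv_shift)
qed

lemma poly_fls_add [simp]: "poly_fls (p + q) = poly_fls p + poly_fls q"
  by (rule fls_eqI) (simp add: poly_fls_nth)

lemma poly_fls_minus [simp]: "poly_fls (- p) = - poly_fls p"
  by (rule fls_eqI) (simp add: poly_fls_nth)

lemma poly_fls_diff [simp]: "poly_fls (p - q) = poly_fls p - poly_fls q"
  by (rule fls_eqI) (simp add: poly_fls_nth)

lemma poly_fls_smult [simp]: "poly_fls (smult a p) = fls_const a * poly_fls p"
  by (rule fls_eqI) (simp add: poly_fls_nth)

lemma poly_fls_mult [simp]: "poly_fls (p * q) = poly_fls p * poly_fls q"
proof (induction p)
  case 0 then show ?case by simp
next
  case (pCons a p)
  have "pCons a p * q = smult a q + pCons 0 (p * q)" by (simp add: mult_pCons_left)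
  then show ?case using pCons
    by (simp add: poly_fls_pCons algebra_simps)
qed

lemma poly_fls_1 [simp]: "poly_fls 1 = 1"
  by (rule fls_eqI) (simp add: poly_fls_nth)

lemma poly_fls_const [simp]: "poly_fls [:c:] = fls_const c"
  by (rule fls_eqI) (auto simp: poly_fls_nth coeff_pCons split: nat.split)

lemma poly_fls_X [simp]: "poly_fls [:0,1:] = fls_X_inv"
  by (simp add: poly_fls_pCons)

lemma poly_fls_power [simp]: "poly_fls (p ^ n) = poly_fls p ^ n"
  by (induction n) auto

lemma poly_fls_monom1: "poly_fls (monom 1 n) = fls_X_inv ^ n"
  by (simp add: monom_altdef)

lemma poly_fls_sum: "poly_fls (\<Sum>i\<in>A. f i) = (\<Sum>i\<in>A. poly_fls (f i))"
  by (induction A rule: infinite_finite_induct) auto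

lemma poly_fls_eq0_iff [simp]: "poly_fls p = 0 \<longleftrightarrow> p = 0"
proof
  assume "poly_fls p = 0"
  then have "coeff p n = 0" for n
    using poly_fls_nth[of p "- int n"] by simp
  then show "p = 0" by (simp add: poly_eqI)
qed simp

lemma poly_fls_subdegree: "p \<noteq> 0 \<Longrightarrow> fls_subdegree (poly_fls p) = - int (degree p)"
  by (rule fls_subdegree_eqI) (auto simp: poly_fls_nth coeff_eq_0)

lemma ldeg_poly_fls: "p \<noteq> 0 \<Longrightarrow> ldeg (poly_fls p) = int (degree p)"
  by (simp add: ldeg_def poly_fls_subdegree)

lemma poly_fls_part: "\<exists>p. \<forall>j\<le>0. poly_fls p $$ j = x $$ j"
proof (intro exI allI impI)
  fix j :: int assume "j \<le> 0"
  then show "poly_fls (fls_prpart x + [:x $$ 0:]) $$ j = x $$ j"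
    by (auto simp: poly_fls_nth)
qed




definition small :: "rat fls \<Rightarrow> int \<Rightarrow> bool" where
  "small d N \<longleftrightarrow> (\<forall>j<N. d $$ j = 0)"

lemma small_iff: "(d = 0 \<or> ldeg d \<le> - N) \<longleftrightarrow> small d N"
proof
  assume "d = 0 \<or> ldeg d \<le> - N"
  then show "small d N" unfolding small_def ldeg_def by auto
next
  assume s: "small d N"
  show "d = 0 \<or> ldeg d \<le> - N"
  proof (cases "d = 0")
    case False
    then have "N \<le> fls_subdegree d" using s by (intro fls_subdegree_geI) (auto simp: small_def)
    then show ?thesis by (simp add: ldeg_def)
  qed simp
qed

lemma small_mono: "small d N \<Longrightarrow> M \<le> N \<Longrightarrow> small d M"
  unfolding small_def by auto

lemma small_mult:
  assumes s: "small d N"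
  shows "small (d * e) (N + fls_subdegree e)"
  unfolding small_def
proof (intro allI impI)
  fix j assume j: "j < N + fls_subdegree e"
  show "(d * e) $$ j = 0"
  proof (cases "d = 0")
    case False
    then have "N \<le> fls_subdegree d" using s by (intro fls_subdegree_geI) (auto simp: small_def)
    then show ?thesis using j by (intro fls_times_nth_eq0) simp
  qed simp
qed

lemma small_neg: "small (- d) N = small d N"
  unfolding small_def by auto

lemma small_add: "small d N \<Longrightarrow> small e N \<Longrightarrow> small (d + e) N"
  unfolding small_def by auto

definition good :: "(nat \<Rightarrow> rat fls) \<Rightarrow> bool" where
  "good c \<longleftrightarrow> (\<forall>n\<ge>1. c n \<noteq> 0 \<and> fls_subdegree (c n) < 0)"

lemma good_shift: "good c \<Longrightarrow> good (\<lambda>i. c (Suc i))"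
  unfolding good_def by auto

lemma cfrac_fin_tail:
  "good c \<Longrightarrow> c 0 \<noteq> 0 \<Longrightarrow> fls_subdegree (c 0) < 0 \<Longrightarrow>
     cfrac_fin c n \<noteq> 0 \<and> fls_subdegree (cfrac_fin c n) = fls_subdegree (c 0)"
proof (induction n arbitrary: c)
  case 0 then show ?case by simp
next
  case (Suc n)
  let ?x = "cfrac_fin (\<lambda>i. c (Suc i)) n"
  have g1: "c 1 \<noteq> 0" "fls_subdegree (c 1) < 0" using Suc.prems(1) unfolding good_def by auto
  have IH: "?x \<noteq> 0 \<and> fls_subdegree ?x = fls_subdegree (c 1)"
    using Suc.IH[of "\<lambda>i. c (Suc i)"] good_shift[OF Suc.prems(1)] g1 by simp
  have sd: "fls_subdegree (1 / ?x) = - fls_subdegree (c 1)"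
    using IH by (simp add: fls_divide_subdegree)
  have "fls_subdegree (c 0 + 1 / ?x) = fls_subdegree (c 0)"
    by (rule fls_subdegree_add_eq1) (use Suc.prems sd g1 in auto)
  moreover have "c 0 + 1 / ?x \<noteq> 0"
  proof
    assume "c 0 + 1 / ?x = 0"
    then have "c 0 = - (1 / ?x)" by (simp add: eq_neg_iff_add_eq_0)
    then have "fls_subdegree (c 0) = - fls_subdegree (c 1)" using sd by simp
    then show False using Suc.prems g1 by simp
  qed
  ultimately show ?case by simp
qed

lemma cfrac_fin_diff:
  "good c \<Longrightarrow> small (cfrac_fin c (Suc n) - cfrac_fin c n) (2 * int n + 1)"
proof (induction n arbitrary: c)
  case 0
  have g1: "c 1 \<noteq> 0" "fls_subdegree (c 1) < 0" using 0 unfolding good_def by auto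
  have "fls_subdegree (1 / c 1) = - fls_subdegree (c 1)"
    using g1 by (simp add: fls_divide_subdegree)
  then have "small (1 / c 1) 1" unfolding small_def using g1 by auto
  then show ?case by simp
next
  case (Suc m)
  let ?c = "\<lambda>i. c (Suc i)"
  let ?x = "cfrac_fin ?c m" and ?x' = "cfrac_fin ?c (Suc m)"
  have g1: "c 1 \<noteq> 0" "fls_subdegree (c 1) < 0" using Suc.prems unfolding good_def by auto
  have gs: "good ?c" using good_shift[OF Suc.prems] .
  have allt: "\<And>n. cfrac_fin ?c n \<noteq> 0 \<and> fls_subdegree (cfrac_fin ?c n) = fls_subdegree (c 1)"
    using cfrac_fin_tail[OF gs] g1 by simp
  note tx = allt[of m] and tx' = allt[of "Suc m"]
  have a1: "cfrac_fin c (Suc (Suc m)) = c 0 + 1 / ?x'" by (rule cfrac_fin.simps(2))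
  have a2: "cfrac_fin c (Suc m) = c 0 + 1 / ?x" by (rule cfrac_fin.simps(2))
  have eq: "cfrac_fin c (Suc (Suc m)) - cfrac_fin c (Suc m) = (- (?x' - ?x)) * (inverse ?x * inverse ?x')"
    unfolding a1 a2 using tx tx' by (simp add: field_simps del: cfrac_fin.simps)
  have IH0: "small (?x' - ?x) (2 * int m + 1)" by (rule Suc.IH[OF gs])
  have IH: "small (- (?x' - ?x)) (2 * int m + 1)"
    using IH0 by (simp only: small_neg)
  have sd: "fls_subdegree (inverse ?x * inverse ?x') = - 2 * fls_subdegree (c 1)"
    using tx tx' by simp
  have "small ((- (?x' - ?x)) * (inverse ?x * inverse ?x')) (2 * int m + 1 + - 2 * fls_subdegree (c 1))"
    using small_mult[OF IH, of "inverse ?x * inverse ?x'"] unfolding sd .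
  then have "small (cfrac_fin c (Suc (Suc m)) - cfrac_fin c (Suc m)) (2 * int m + 1 + - 2 * fls_subdegree (c 1))"
    unfolding eq .
  then show ?case by (rule small_mono) (use g1 in simp)
qed

lemma stable:
  assumes "\<And>k. small (s (Suc k) - s k) (int k + 1)"
  shows "m \<ge> n \<Longrightarrow> j \<le> int n \<Longrightarrow> s m $$ j = s n $$ j"
proof (induction m rule: dec_induct)
  case base then show ?case by simp
next
  case (step m)
  have "(s (Suc m) - s m) $$ j = 0" using assms[of m] step unfolding small_def by auto
  then show ?case using step by simp
qed

lemma limit_exists:
  assumes "\<And>k. small (s (Suc k) - s k) (int k + 1)"
  shows "\<exists>a. \<forall>n. small (a - s n) (int n + 1)"
proof -
  define f where "f = (\<lambda>j::int. s (nat j) $$ j)"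
  have ev: "\<forall>\<^sub>\<infinity>n. f (- int n) = 0"
  proof -
    have "\<forall>\<^sub>\<infinity>n. s 0 $$ (- int n) = 0" by simp
    then show ?thesis unfolding f_def by simp
  qed
  define a where "a = Abs_fls f"
  have an: "a $$ j = s (nat j) $$ j" for j
    unfolding a_def using ev by (simp add: f_def)
  have "small (a - s n) (int n + 1)" for n
    unfolding small_def
  proof (intro allI impI)
    fix j assume j: "j < int n + 1"
    show "(a - s n) $$ j = 0"
    proof (cases "j \<le> 0")
      case True
      then show ?thesis using stable[OF assms, of 0 n j] True by (simp add: an)
    next
      case False
      then show ?thesis using stable[OF assms, of "nat j" n j] j by (simp add: an)
    qed
  qed
  then show ?thesis by blast
qed

lemma fls_conv_unique: "fls_conv s a \<Longrightarrow> fls_conv s b \<Longrightarrow> a = b"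
proof (rule fls_eqI)
  fix j
  assume a: "fls_conv s a" and b: "fls_conv s b"
  have "eventually (\<lambda>n. small (s n - a) (j + 1) \<and> small (s n - b) (j + 1)) sequentially"
    using a b unfolding fls_conv_def small_iff by (intro eventually_conj) blast+
  then obtain N where N: "\<And>n. n \<ge> N \<Longrightarrow> small (s n - a) (j + 1) \<and> small (s n - b) (j + 1)"
    unfolding eventually_sequentially by blast
  have "small (s N - a) (j + 1)" "small (s N - b) (j + 1)" using N[of N] by auto
  then have "(s N - a) $$ j = 0" "(s N - b) $$ j = 0"
    unfolding small_def by simp_all
  then show "a $$ j = b $$ j" by simp
qed

lemma cfrac_prop:
  assumes "good c"
  shows "\<forall>j\<le>0. cfrac c $$ j = c 0 $$ j"
proof -
  have d: "small (cfrac_fin c (Suc k) - cfrac_fin c k) (int k + 1)" for k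
    by (rule small_mono[OF cfrac_fin_diff[OF assms]]) simp
  obtain a where a: "\<And>n. small (a - cfrac_fin c n) (int n + 1)"
    using limit_exists[of "cfrac_fin c", OF d] by blast
  have conv: "fls_conv (cfrac_fin c) a"
    unfolding fls_conv_def small_iff
  proof
    fix N :: int
    show "eventually (\<lambda>n. small (cfrac_fin c n - a) N) sequentially"
      unfolding eventually_sequentially
    proof (intro exI allI impI)
      fix n assume "nat N \<le> n"
      then have "N \<le> int n + 1" by linarith
      then show "small (cfrac_fin c n - a) N"
        using small_mono[OF a[of n]] small_neg[of "cfrac_fin c n - a"] by simp
    qed
  qed
  have "cfrac c = a"
    unfolding cfrac_def using conv fls_conv_unique by blast
  then show ?thesis using a[of 0] unfolding small_def by auto
qed

lemma ldeg_lam: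
  assumes "\<forall>i. degree (A i) \<ge> 1"
  shows "ldeg (lam A i) = int (degree (A i))"
proof -
  have ne: "A k \<noteq> 0" for k using assms[rule_format, of k] by auto
  have g1: "good (\<lambda>n. poly_fls (A (i + int n)))"
    unfolding good_def using ne assms by (auto simp: poly_fls_subdegree Suc_le_eq)
  have g2: "good (\<lambda>n. if n = 0 then 0 else poly_fls (A (i - int n)))"
    unfolding good_def using ne assms by (auto simp: poly_fls_subdegree Suc_le_eq)
  have c: "lam A i $$ j = poly_fls (A i) $$ j" if "j \<le> 0" for j
    using cfrac_prop[OF g1] cfrac_prop[OF g2] that unfolding lam_def by simp
  have "fls_subdegree (lam A i) = - int (degree (A i))"
  proof (rule fls_subdegree_eqI)
    show "lam A i $$ (- int (degree (A i))) \<noteq> 0"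
      using c[of "- int (degree (A i))"] ne[of i] by (simp add: poly_fls_nth)
    fix k assume "k < - int (degree (A i))"
    then show "lam A i $$ k = 0" using c[of k] by (simp add: poly_fls_nth coeff_eq_0)
  qed
  then show ?thesis by (simp add: ldeg_def)
qed




definition Sset :: "ereal set" where
  "Sset = {ereal (of_int k) | k::int. k \<ge> 1} \<union> {\<infinity>}"

lemma limsup_int:
  fixes g :: "'a \<Rightarrow> int"
  assumes F: "F \<noteq> bot" and g: "\<forall>x. g x \<ge> 1"
  shows "Limsup F (\<lambda>x. ereal (of_int (g x))) \<in> Sset"
proof -
  let ?L = "Limsup F (\<lambda>x. ereal (of_int (g x)))"
  have ge: "1 \<le> ?L" by (rule le_Limsup[OF F]) (use g in auto)
  show ?thesis
  proof (cases ?L)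
    case (real r)
    then have r1: "r \<ge> 1" using ge by simp
    have "r = of_int \<lfloor>r\<rfloor>"
    proof (rule ccontr)
      assume ne: "r \<noteq> of_int \<lfloor>r\<rfloor>"
      have "?L < ereal (of_int (\<lfloor>r\<rfloor> + 1))" using real by simp
      then have "eventually (\<lambda>x. ereal (of_int (g x)) < ereal (of_int (\<lfloor>r\<rfloor> + 1))) F"
        by (rule Limsup_lessD)
      then have "eventually (\<lambda>x. ereal (of_int (g x)) \<le> ereal (of_int \<lfloor>r\<rfloor>)) F"
        by eventually_elim simp
      then have "?L \<le> ereal (of_int \<lfloor>r\<rfloor>)" by (rule Limsup_bounded)
      then have "r \<le> of_int \<lfloor>r\<rfloor>" using real by simp
      then show False using ne by linarith
    qed
    then show ?thesis unfolding Sset_def using real r1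
      by (intro UnI1 CollectI exI[of _ "\<lfloor>r\<rfloor>"]) auto
  next
    case PInf then show ?thesis by (simp add: Sset_def)
  next
    case MInf then show ?thesis using ge by simp
  qed
qed

lemma Lval_in:
  assumes "\<forall>i. degree (A i) \<ge> 1"
  shows "Lval A \<in> Sset"
proof -
  have e: "(\<lambda>i. ereal (of_int (ldeg (lam A i)))) = (\<lambda>i. ereal (of_int (int (degree (A i)))))"
    using ldeg_lam[OF assms] by simp
  have g: "\<forall>i. int (degree (A i)) \<ge> 1" using assms by (auto simp: Suc_le_eq)
  have "Limsup at_top (\<lambda>i. ereal (of_int (int (degree (A i))))) \<in> Sset"
    by (rule limsup_int[OF _ g]) simp
  moreover have "Limsup at_bot (\<lambda>i. ereal (of_int (int (degree (A i))))) \<in> Sset"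
    by (rule limsup_int[OF _ g]) simp
  ultimately show ?thesis unfolding Lval_def e max_def by auto
qed

lemma Lval_attain:
  assumes "x \<in> Sset"
  shows "\<exists>A. Lval A = x \<and> (\<forall>i. degree (A i) \<ge> 1)"
proof -
  { fix k :: int assume k: "k \<ge> 1"
    define A :: "int \<Rightarrow> rat poly" where "A = (\<lambda>_. monom 1 (nat k))"
    have d: "\<forall>i. degree (A i) \<ge> 1" using k by (simp add: A_def degree_monom_eq)
    have e: "(\<lambda>i. ereal (of_int (ldeg (lam A i)))) = (\<lambda>i. ereal (of_int k))"
      using ldeg_lam[OF d] k by (simp add: A_def degree_monom_eq)
    have "Lval A = ereal (of_int k)"
      unfolding Lval_def e by (simp add: Limsup_const)
    then have ?thesis if "x = ereal (of_int k)" using d that by blast }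
  moreover
  { define A :: "int \<Rightarrow> rat poly" where "A = (\<lambda>i. monom 1 (nat \<bar>i\<bar> + 1))"
    have d: "\<forall>i. degree (A i) \<ge> 1" by (simp add: A_def degree_monom_eq)
    have e: "(\<lambda>i. ereal (of_int (ldeg (lam A i)))) = (\<lambda>i. ereal (of_int (int (nat \<bar>i\<bar> + 1))))"
      using ldeg_lam[OF d] by (simp add: A_def degree_monom_eq)
    have "((\<lambda>i. ereal (of_int (int (nat \<bar>i\<bar> + 1)))) \<longlongrightarrow> \<infinity>) (at_top :: int filter)"
      unfolding tendsto_PInfty
    proof
      fix r :: real
      show "eventually (\<lambda>i::int. ereal r < ereal (of_int (int (nat \<bar>i\<bar> + 1)))) at_top"
        unfolding eventually_at_top_linorder
        by (rule exI[of _ "\<lceil>r\<rceil>"]) (auto, linarith)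
    qed
    then have "Limsup at_top (\<lambda>i. ereal (of_int (int (nat \<bar>i\<bar> + 1)))) = \<infinity>"
      by (intro lim_imp_Limsup) simp_all
    then have "Lval A = \<infinity>" unfolding Lval_def e by simp
    then have ?thesis if "x = \<infinity>" using d that by blast }
  ultimately show ?thesis using assms unfolding Sset_def by blast
qed

lemma RHS_eq: "{Lval A | A :: int \<Rightarrow> rat poly. \<forall>i. degree (A i) \<ge> 1} = Sset"
  using Lval_in Lval_attain by blast




definition RR :: "rat fls \<Rightarrow> int \<Rightarrow> rat fls set" where
  "RR \<alpha> k = {r. \<exists>p q. q \<noteq> 0 \<and> r = poly_fls p / poly_fls q \<and>
                   ldeg (\<alpha> - r) \<le> - 2 * int (degree q) - k}"

lemma lag_RR: "lag \<alpha> = Sup {ereal (of_int k) | k::int. infinite (RR \<alpha> k)}"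
  unfolding lag_def RR_def ..

lemma RR_mono: "k' \<le> k \<Longrightarrow> RR \<alpha> k \<subseteq> RR \<alpha> k'"
  unfolding RR_def by force

lemma Sup_K:
  fixes P :: "int \<Rightarrow> bool"
  assumes one: "P 1" and down: "\<And>k k'. P k \<Longrightarrow> k' \<le> k \<Longrightarrow> P k'"
  shows "Sup {ereal (of_int k) | k. P k} \<in> Sset"
proof -
  have img: "{ereal (of_int k) | k. P k} = (\<lambda>k. ereal (of_int k)) ` {k. P k}" by auto
  show ?thesis
  proof (cases "bdd_above {k. P k}")
    case True
    then obtain M where M: "\<And>k. P k \<Longrightarrow> k \<le> M" by (auto simp: bdd_above_def)
    define A where "A = {k. P k \<and> 1 \<le> k}"
    have finA: "finite A" by (rule finite_subset[of _ "{1..M}"]) (auto simp: A_def M)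
    have 1: "1 \<in> A" using one by (simp add: A_def)
    define m where "m = Max A"
    have mA: "m \<in> A" using finA 1 by (auto simp: m_def intro: Max_in)
    have mge: "k \<le> m" if "P k" for k
    proof (cases "1 \<le> k")
      case True then show ?thesis using that finA by (simp add: m_def A_def)
    next
      case False then show ?thesis using mA by (simp add: A_def)
    qed
    have "Sup {ereal (of_int k) | k. P k} = ereal (of_int m)"
    proof (rule antisym)
      show "Sup {ereal (of_int k) | k. P k} \<le> ereal (of_int m)"
        by (rule Sup_least) (auto simp: mge)
      show "ereal (of_int m) \<le> Sup {ereal (of_int k) | k. P k}"
        by (rule Sup_upper) (use mA in \<open>auto simp: A_def\<close>)
    qed
    then show ?thesis using mA by (auto simp: Sset_def A_def)
  next
    case False
    have "(SUP k\<in>{k. P k}. ereal (of_int k)) = \<infinity>"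
    proof (rule SUP_PInfty)
      fix n :: nat
      obtain k where "P k" "k > int n" using False by (auto simp: bdd_above_def not_le)
      then show "\<exists>i\<in>{k. P k}. ereal (real n) \<le> ereal (of_int i)" by (intro bexI[of _ k]) auto
    qed
    then show ?thesis unfolding img by (simp add: Sset_def)
  qed
qed

lemma homog:
  fixes f :: "nat \<Rightarrow> nat \<Rightarrow> rat"
  shows "finite V \<Longrightarrow> card V > m \<Longrightarrow> \<exists>x. (\<exists>j\<in>V. x j \<noteq> 0) \<and> (\<forall>i<m. (\<Sum>j\<in>V. f i j * x j) = 0)"
proof (induction m arbitrary: V f)
  case 0
  then obtain j where "j \<in> V" by (metis card_gt_0_iff equals0I)
  then show ?case by (intro exI[of _ "\<lambda>_. 1"]) auto
next
  case (Suc m)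
  show ?case
  proof (cases "\<forall>j\<in>V. f m j = 0")
    case True
    obtain x where x: "\<exists>j\<in>V. x j \<noteq> 0" "\<forall>i<m. (\<Sum>j\<in>V. f i j * x j) = 0"
      using Suc.IH[of V f] Suc.prems by auto
    have "\<forall>i<Suc m. (\<Sum>j\<in>V. f i j * x j) = 0" using x True by (auto simp: less_Suc_eq)
    then show ?thesis using x by blast
  next
    case False
    then obtain j0 where j0: "j0 \<in> V" "f m j0 \<noteq> 0" by blast
    define V' where "V' = V - {j0}"
    define f' where "f' = (\<lambda>i j. f i j - f i j0 / f m j0 * f m j)"
    have "finite V'" "card V' > m" using Suc.prems j0 by (auto simp: V'_def)
    then obtain x' where x': "\<exists>j\<in>V'. x' j \<noteq> 0" "\<forall>i<m. (\<Sum>j\<in>V'. f' i j * x' j) = 0"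
      using Suc.IH by blast
    define S where "S = (\<Sum>j\<in>V'. f m j * x' j)"
    define x where "x = x'(j0 := - S / f m j0)"
    have xV': "(\<Sum>j\<in>V'. g j * x j) = (\<Sum>j\<in>V'. g j * x' j)" for g
      by (rule sum.cong) (auto simp: x_def V'_def)
    have split: "(\<Sum>j\<in>V. g j * x j) = g j0 * x j0 + (\<Sum>j\<in>V'. g j * x' j)" for g
      using Suc.prems(1) j0 xV'[of g] by (simp add: V'_def sum.remove)
    have nz: "\<exists>j\<in>V. x j \<noteq> 0" using x'(1) by (auto simp: x_def V'_def)
    have eqs: "(\<Sum>j\<in>V. f i j * x j) = 0" if "i < Suc m" for i
    proof (cases "i = m")
      case True then show ?thesis using split[of "f m"] j0 by (simp add: x_def S_def)
    next
      case False
      then have im: "i < m" using that by simp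
      have "(\<Sum>j\<in>V'. f' i j * x' j) = (\<Sum>j\<in>V'. f i j * x' j) - f i j0 / f m j0 * S"
        by (simp add: f'_def S_def algebra_simps sum_subtractf sum_distrib_left)
      then have "(\<Sum>j\<in>V'. f i j * x' j) = f i j0 / f m j0 * S" using x'(2) im by simp
      then show ?thesis using split[of "f i"] j0 by (simp add: x_def field_simps)
    qed
    show ?thesis using nz eqs by blast
  qed
qed

lemma poly_fls_monom: "poly_fls (monom c l) = fls_const c * fls_X_inv ^ l"
proof -
  have "monom c l = smult c (monom 1 l)" by (simp add: smult_monom)
  then show ?thesis by (simp add: poly_fls_monom1)
qed

lemma poly_fls_mult_nth:
  assumes "degree q \<le> N"
  shows "(poly_fls q * a) $$ j = (\<Sum>l\<le>N. coeff q l * a $$ (j + int l))"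
proof -
  have "q = (\<Sum>l\<le>N. monom (coeff q l) l)" using poly_as_sum_of_monoms'[OF assms] by simp
  then have "poly_fls q * a = (\<Sum>l\<le>N. fls_const (coeff q l) * (fls_X_inv ^ l * a))"
    by (metis (no_types, lifting) mult.assoc poly_fls_monom poly_fls_sum sum.cong sum_distrib_right)
  moreover have "fls_X_inv ^ l * a = fls_shift (int l) a" for l :: nat
    by (simp add: fls_X_inv_power_conv_shift_1 fls_shifted_times_simps)
  ultimately show ?thesis by (simp add: fls_nth_sum)
qed

lemma dirichlet_step:
  fixes \<alpha> :: "rat fls" and n :: nat
  shows "\<exists>p q. q \<noteq> 0 \<and> degree q \<le> n \<and> small (poly_fls q * \<alpha> - poly_fls p) (int n + 1)"
proof -
  define f where "f = (\<lambda>i l. \<alpha> $$ (int i + 1 + int l))"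
  obtain x where x: "\<exists>j\<in>{..n}. x j \<noteq> 0" "\<forall>i<n. (\<Sum>l\<in>{..n}. f i l * x l) = 0"
    using homog[of "{..n}" n f] by auto
  define q where "q = (\<Sum>l\<le>n. monom (x l) l)"
  have cq: "coeff q l = (if l \<le> n then x l else 0)" for l
    by (simp add: q_def coeff_sum coeff_monom)
  have qne: "q \<noteq> 0" using x(1) cq by (metis atMost_iff coeff_0)
  have dq: "degree q \<le> n" by (rule degree_le) (simp add: cq)
  have pn: "(poly_fls q * \<alpha>) $$ j = (\<Sum>l\<le>n. x l * \<alpha> $$ (j + int l))" for j
    using poly_fls_mult_nth[OF dq] by (simp add: cq)
  obtain p where p: "\<forall>j\<le>0. poly_fls p $$ j = (poly_fls q * \<alpha>) $$ j"
    using poly_fls_part by blast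
  have "small (poly_fls q * \<alpha> - poly_fls p) (int n + 1)"
    unfolding small_def
  proof (intro allI impI)
    fix j :: int assume j: "j < int n + 1"
    show "(poly_fls q * \<alpha> - poly_fls p) $$ j = 0"
    proof (cases "j \<le> 0")
      case True then show ?thesis using p by simp
    next
      case False
      define i where "i = nat (j - 1)"
      have ji: "j = int i + 1" "i < n" using False j by (auto simp: i_def)
      have "(poly_fls q * \<alpha>) $$ j = (\<Sum>l\<le>n. f i l * x l)"
        unfolding pn by (rule sum.cong) (auto simp: f_def ji)
      also have "\<dots> = 0" using x(2) ji by simp
      finally show ?thesis using False by (simp add: poly_fls_nth)
    qed
  qed
  then show ?thesis using qne dq by blast
qed

lemma in_rat_funs: "q \<noteq> 0 \<Longrightarrow> poly_fls p / poly_fls q \<in> rat_funs"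
  unfolding rat_funs_def by blast

lemma dirichlet:
  assumes irr: "\<alpha> \<notin> rat_funs"
  shows "infinite (RR \<alpha> 1)"
proof
  assume fin: "finite (RR \<alpha> 1)"
  have ex: "\<exists>r\<in>RR \<alpha> 1. fls_subdegree (\<alpha> - r) \<ge> int n + 1" for n :: nat
  proof -
    obtain p q where pq: "q \<noteq> 0" "degree q \<le> n" "small (poly_fls q * \<alpha> - poly_fls p) (int n + 1)"
      using dirichlet_step by blast
    define r where "r = poly_fls p / poly_fls q"
    define d where "d = poly_fls q * \<alpha> - poly_fls p"
    have Q: "poly_fls q \<noteq> 0" using pq by simp
    have ar: "\<alpha> - r = d / poly_fls q" using Q by (simp add: r_def d_def field_simps)
    have "\<alpha> \<noteq> r" using irr in_rat_funs[OF pq(1)] by (auto simp: r_def)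
    then have dne: "d \<noteq> 0" using ar by auto
    have "int n + 1 \<le> fls_subdegree d"
      using pq(3) dne by (intro fls_subdegree_geI) (auto simp: small_def d_def)
    moreover have sd: "fls_subdegree (\<alpha> - r) = fls_subdegree d + int (degree q)"
      unfolding ar using dne Q pq by (simp add: fls_divide_subdegree poly_fls_subdegree)
    ultimately have "fls_subdegree (\<alpha> - r) \<ge> int n + 1 + int (degree q)" by simp
    then have "ldeg (\<alpha> - r) \<le> - 2 * int (degree q) - 1" using pq(2) by (simp add: ldeg_def)
    then have "r \<in> RR \<alpha> 1" unfolding RR_def mem_Collect_eq
      by (intro exI[of _ p] exI[of _ q]) (use pq(1) in \<open>simp add: r_def\<close>)
    then show ?thesis using sd \<open>int n + 1 \<le> fls_subdegree d\<close> by (intro bexI[of _ r]) auto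
  qed
  have "finite ((\<lambda>r. fls_subdegree (\<alpha> - r)) ` RR \<alpha> 1)" using fin by simp
  then have "bdd_above ((\<lambda>r. fls_subdegree (\<alpha> - r)) ` RR \<alpha> 1)" by (rule bdd_above_finite)
  then obtain B where B: "\<And>r. r \<in> RR \<alpha> 1 \<Longrightarrow> fls_subdegree (\<alpha> - r) \<le> B"
    by (auto simp: bdd_above_def)
  obtain r where "r \<in> RR \<alpha> 1" "fls_subdegree (\<alpha> - r) \<ge> int (nat B) + 1" using ex by blast
  moreover have "int (nat B) \<ge> B" by simp
  ultimately show False using B[of r] by linarith
qed

lemma lag_irr:
  assumes "\<alpha> \<notin> rat_funs"
  shows "lag \<alpha> \<in> Sset"
  unfolding lag_RR
proof (rule Sup_K)
  show "infinite (RR \<alpha> 1)" by (rule dirichlet[OF assms])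
  fix k k' :: int assume "infinite (RR \<alpha> k)" "k' \<le> k"
  then show "infinite (RR \<alpha> k')" using RR_mono infinite_super by metis
qed

lemma rat_bound:
  assumes b: "b \<noteq> 0" and q: "q \<noteq> 0" and a: "\<alpha> = poly_fls a / poly_fls b"
    and ne: "\<alpha> \<noteq> poly_fls p / poly_fls q"
  shows "fls_subdegree (\<alpha> - poly_fls p / poly_fls q) \<le> int (degree b) + int (degree q)"
proof -
  have B: "poly_fls b \<noteq> 0" and Q: "poly_fls q \<noteq> 0" using b q by auto
  have e: "\<alpha> - poly_fls p / poly_fls q = poly_fls (a * q - b * p) / poly_fls (b * q)"
    using B Q by (simp add: a field_simps)
  have nz: "a * q - b * p \<noteq> 0"
  proof
    assume "a * q - b * p = 0"
    then have "\<alpha> - poly_fls p / poly_fls q = 0" unfolding e by simp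
    then show False using ne by simp
  qed
  have bq: "b * q \<noteq> 0" using b q by simp
  have s1: "fls_subdegree (poly_fls (a * q - b * p)) = - int (degree (a * q - b * p))"
    by (rule poly_fls_subdegree[OF nz])
  have s2: "fls_subdegree (poly_fls (b * q)) = - (int (degree b) + int (degree q))"
    using poly_fls_subdegree[OF bq] degree_mult_eq[OF b q] by simp
  have D: "fls_subdegree (poly_fls (a * q - b * p) / poly_fls (b * q)) =
      fls_subdegree (poly_fls (a * q - b * p)) - fls_subdegree (poly_fls (b * q))"
    by (rule fls_divide_subdegree) (simp_all only: poly_fls_eq0_iff nz bq not_False_eq_True)
  show ?thesis unfolding e D s1 s2 by simp
qed

lemma rat_RR_empty:
  assumes b: "b \<noteq> 0" and a: "\<alpha> = poly_fls a / poly_fls b" and k: "k > int (degree b)"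
  shows "RR \<alpha> k = {}"
proof (rule ccontr)
  assume "RR \<alpha> k \<noteq> {}"
  then obtain p q where pq: "q \<noteq> 0" "ldeg (\<alpha> - poly_fls p / poly_fls q) \<le> - 2 * int (degree q) - k"
    unfolding RR_def by blast
  show False
  proof (cases "\<alpha> = poly_fls p / poly_fls q")
    case True then show False using pq k by (simp add: ldeg_def)
  next
    case False
    from rat_bound[OF b pq(1) a False] pq(2) k show False by (simp add: ldeg_def)
  qed
qed




lemma fls_X_inv_X: "fls_X_inv * fls_X = (1 :: rat fls)"
  by (simp add: fls_X_inv_times_conv_shift)

lemma alpha_exists:
  fixes k :: nat
  assumes k: "k \<ge> 1"
  shows "\<exists>\<alpha>::rat fls. \<alpha> \<noteq> 0 \<and> \<alpha> * \<alpha> = fls_X_inv ^ k * \<alpha> + 1 \<and> fls_subdegree \<alpha> = - int k"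
proof -
  define a :: "rat fps" where "a = 1 + fps_const 4 * fps_X ^ (2 * k)"
  have a0: "a $ 0 = 1" using k by (simp add: a_def)
  define s where "s = fps_radical (\<lambda>_ _. 1) 2 a"
  have "s ^ 2 = a"
    using power_radical[of a "\<lambda>_ _. 1" 1] a0 by (simp add: s_def numeral_2_eq_2)
  define S where "S = fps_to_fls s"
  define Y :: "rat fls" where "Y = fls_X_inv ^ k"
  define Z :: "rat fls" where "Z = fls_X ^ k"
  have YZ: "Y * Z = 1" unfolding Y_def Z_def by (simp add: power_mult_distrib[symmetric] fls_X_inv_X)
  have ZZ: "Z * Z = fls_X ^ (2 * k)" unfolding Z_def by (simp add: power_add[symmetric] mult_2)
  have fa: "fps_to_fls a = 1 + fls_const 4 * (Z * Z)"
  proof (rule fls_eqI)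
    fix n :: int
    show "fps_to_fls a $$ n = (1 + fls_const 4 * (Z * Z)) $$ n"
    proof (cases "n < 0")
      case True then show ?thesis using k by (simp add: ZZ)
    next
      case False
      then show ?thesis by (simp add: ZZ a_def nat_eq_iff)
    qed
  qed
  have SS: "S * S = 1 + fls_const 4 * (Z * Z)"
    unfolding S_def fls_times_fps_to_fls[symmetric] using \<open>s ^ 2 = a\<close> fa
    by (simp add: power2_eq_square)
  define \<alpha> where "\<alpha> = Y * (1 + S) / 2"
  have s0: "s $ 0 = 1" using a0 by (simp add: s_def)
  have e: "(1 + S) = fps_to_fls (1 + s)" by (simp add: S_def)
  have sub0: "subdegree (1 + s) = 0" using s0 by (simp add: subdegree_eq_0_iff)
  have nz0: "1 + s \<noteq> 0" using s0 by (metis fps_add_nth fps_nonzero_nth fps_one_nth one_add_one zero_neq_numeral)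
  have S1: "1 + S \<noteq> 0" "fls_subdegree (1 + S) = 0"
    unfolding e fps_to_fls_eq_0_iff fls_subdegree_fls_to_fps using sub0 nz0 by simp_all
  have Y0: "Y \<noteq> 0" "fls_subdegree Y = - int k" unfolding Y_def by (simp_all add: fls_subdegree_pow)
  have ne: "\<alpha> \<noteq> 0" using S1 Y0 by (simp add: \<alpha>_def)
  have sd: "fls_subdegree \<alpha> = - int k"
    unfolding \<alpha>_def using S1 Y0 by (simp add: fls_divide_subdegree)
  have 4: "fls_const (4::rat) = 4" by simp
  have "\<alpha> * \<alpha> - Y * \<alpha> - 1 = (Y * Y) * ((S * S - 1) / 4) - 1"
    unfolding \<alpha>_def by (simp add: field_simps)
  also have "\<dots> = (Y * Z) * (Y * Z) - 1" unfolding SS 4 by (simp add: field_simps)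
  also have "\<dots> = 0" using YZ by simp
  finally have "\<alpha> * \<alpha> = Y * \<alpha> + 1" by (simp add: algebra_simps)
  then show ?thesis using ne sd unfolding Y_def by blast
qed




fun qs :: "nat \<Rightarrow> nat \<Rightarrow> rat poly" where
  "qs k 0 = 1"
| "qs k (Suc 0) = monom 1 k"
| "qs k (Suc (Suc n)) = monom 1 k * qs k (Suc n) + qs k n"

lemma qs_deg: "k \<ge> 1 \<Longrightarrow> qs k n \<noteq> 0 \<and> degree (qs k n) = n * k"
proof (induction k n rule: qs.induct)
  case (1 k) then show ?case by simp
next
  case (2 k) then show ?case by (simp add: degree_monom_eq)
next
  case (3 k n)
  have h1: "qs k (Suc n) \<noteq> 0" "degree (qs k (Suc n)) = Suc n * k" using 3 by auto
  have h0: "degree (qs k n) = n * k" using 3 by auto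
  have m: "monom (1::rat) k \<noteq> 0" "degree (monom (1::rat) k) = k" by (simp_all add: degree_monom_eq)
  have d1: "degree (monom 1 k * qs k (Suc n)) = Suc (Suc n) * k"
    using h1 m by (simp add: degree_mult_eq)
  have lt: "degree (qs k n) < degree (monom 1 k * qs k (Suc n))"
    using d1 h0 3(3) by simp
  have d: "degree (monom 1 k * qs k (Suc n) + qs k n) = Suc (Suc n) * k"
    using degree_add_eq_left[OF lt] d1 by simp
  moreover have "monom 1 k * qs k (Suc n) + qs k n \<noteq> 0"
    using d 3(3) by (metis degree_0 mult_is_0 nat.distinct(1) not_one_le_zero)
  ultimately show ?case by simp
qed

locale alpha_k =
  fixes k :: nat and \<alpha> :: "rat fls"
  assumes k: "k \<ge> 1" and ne: "\<alpha> \<noteq> 0" and eq: "\<alpha> * \<alpha> = fls_X_inv ^ k * \<alpha> + 1"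
    and sd: "fls_subdegree \<alpha> = - int k"
begin

definition Y :: "rat fls" where "Y = fls_X_inv ^ k"
definition ab :: "rat fls" where "ab = Y - \<alpha>"
definition Q :: "nat \<Rightarrow> rat fls" where "Q n = poly_fls (qs k n)"

lemma aab: "\<alpha> * ab = -1"
  using eq by (simp add: ab_def Y_def algebra_simps)

lemma ab_ne: "ab \<noteq> 0" using aab by auto

lemma ab_sd: "fls_subdegree ab = int k"
proof -
  have "fls_subdegree (\<alpha> * ab) = 0" using aab by simp
  then show ?thesis using ne ab_ne sd by simp
qed

lemma Q_ne: "Q n \<noteq> 0" using qs_deg[OF k] by (simp add: Q_def)

lemma Q_sd: "fls_subdegree (Q n) = - int (n * k)"
  using qs_deg[OF k, of n] by (simp add: Q_def poly_fls_subdegree)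

lemma e_formula: "Q (Suc n) - \<alpha> * Q n = ab ^ Suc n"
proof (induction n)
  case 0 then show ?case by (simp add: Q_def ab_def Y_def poly_fls_monom1)
next
  case (Suc n)
  have "Q (Suc (Suc n)) - \<alpha> * Q (Suc n) = ab * Q (Suc n) + Q n"
    by (simp add: Q_def ab_def Y_def poly_fls_monom1 algebra_simps)
  also have "\<dots> = ab * (Q (Suc n) - \<alpha> * Q n)"
  proof -
    have "ab * (\<alpha> * Q n) = - Q n" using aab by (simp add: mult.assoc[symmetric] mult.commute)
    then show ?thesis by (simp add: right_diff_distrib)
  qed
  also have "\<dots> = ab ^ Suc (Suc n)" using Suc by simp
  finally show ?case .
qed

definition r :: "nat \<Rightarrow> rat fls" where "r n = Q (Suc n) / Q n"

lemma r_diff: "\<alpha> - r n = - (ab ^ Suc n) / Q n"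
proof -
  have "\<alpha> - r n = - (Q (Suc n) - \<alpha> * Q n) / Q n"
    using Q_ne[of n] by (simp add: r_def field_simps)
  then show ?thesis by (simp add: e_formula)
qed

lemma r_diff_ne: "\<alpha> - r n \<noteq> 0"
  unfolding r_diff using ab_ne Q_ne by simp

lemma r_sd: "fls_subdegree (\<alpha> - r n) = int ((2 * n + 1) * k)"
proof -
  have "fls_subdegree (- (ab ^ Suc n) / Q n) = fls_subdegree (- (ab ^ Suc n)) - fls_subdegree (Q n)"
    by (rule fls_divide_subdegree) (use ab_ne Q_ne in simp_all)
  also have "\<dots> = int (Suc n) * int k + int (n * k)"
  proof -
    have P: "fls_subdegree (ab ^ Suc n) = int (Suc n) * int k"
      using fls_subdegree_pow[of ab "Suc n"] ab_sd by (simp del: power_Suc)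
    show ?thesis by (simp only: fls_uminus_subdegree P Q_sd)
  qed
  finally show ?thesis unfolding r_diff by (simp add: algebra_simps)
qed

lemma r_in: "r n \<in> RR \<alpha> (int k)"
proof -
  have "ldeg (\<alpha> - r n) \<le> - 2 * int (degree (qs k n)) - int k"
    using r_sd[of n] qs_deg[OF k, of n] by (simp add: ldeg_def algebra_simps)
  then show ?thesis unfolding RR_def mem_Collect_eq
    by (intro exI[of _ "qs k (Suc n)"] exI[of _ "qs k n"]) (use qs_deg[OF k] in \<open>simp add: r_def Q_def\<close>)
qed

lemma r_inj: "inj r"
proof
  fix m n assume "r m = r n"
  then have "int ((2 * m + 1) * k) = int ((2 * n + 1) * k)" using r_sd by metis
  then show "m = n" using k by simp
qed

lemma RR_k_infinite: "infinite (RR \<alpha> (int k))"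
  using range_inj_infinite[OF r_inj] r_in infinite_super by (metis image_subsetI)

lemma RR_k1_empty: "RR \<alpha> (int k + 1) = {}"
proof (rule ccontr)
  assume "RR \<alpha> (int k + 1) \<noteq> {}"
  then obtain p q where q: "q \<noteq> 0" and le: "ldeg (\<alpha> - poly_fls p / poly_fls q) \<le> - 2 * int (degree q) - (int k + 1)"
    unfolding RR_def by blast
  define P where "P = poly_fls p"
  define QQ where "QQ = poly_fls q"
  define x where "x = P / QQ"
  define d where "d = \<alpha> - x"
  have QQ: "QQ \<noteq> 0" using q by (simp add: QQ_def)
  have dne: "d \<noteq> 0"
  proof
    assume "d = 0"
    then show False using le by (simp add: d_def x_def P_def QQ_def ldeg_def)
  qed
  have dsd: "fls_subdegree d \<ge> 2 * int (degree q) + int k + 1"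
    using le by (simp add: d_def x_def P_def QQ_def ldeg_def)
  have s1: "fls_subdegree (\<alpha> - ab) = - int k"
    using fls_subdegree_diff_eq1[of \<alpha> ab] ne sd ab_sd k by simp
  have n1: "\<alpha> - ab \<noteq> 0" using s1 k by auto
  have xab: "x - ab = (\<alpha> - ab) - d" by (simp add: d_def)
  have h: "fls_subdegree ((\<alpha> - ab) - d) = fls_subdegree (\<alpha> - ab)"
    by (rule fls_subdegree_diff_eq1) (use n1 s1 dsd in auto)
  have s2: "fls_subdegree (x - ab) = - int k" unfolding xab h s1 by (rule refl)
  have n2: "x - ab \<noteq> 0"
  proof
    assume "x - ab = 0"
    then have "\<alpha> - ab = d" using xab by simp
    then show False using s1 dsd by simp
  qed
  define N where "N = poly_fls (p * p - monom 1 k * p * q - q * q)"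
  have id1: "(x - \<alpha>) * (x - ab) = x * x - Y * x - 1"
    using eq by (simp add: ab_def Y_def algebra_simps)
  have NN: "N = QQ * QQ * ((x - \<alpha>) * (x - ab))"
    unfolding id1 using QQ by (simp add: N_def x_def P_def QQ_def Y_def poly_fls_monom1 field_simps)
  have xa: "x - \<alpha> = - d" by (simp add: d_def)
  have Nne: "N \<noteq> 0" unfolding NN xa using QQ dne n2 by simp
  have "fls_subdegree N = 2 * fls_subdegree QQ + fls_subdegree d + fls_subdegree (x - ab)"
    unfolding NN xa using QQ dne n2 by simp
  also have "\<dots> = - 2 * int (degree q) + fls_subdegree d - int k"
    using q s2 by (simp add: QQ_def poly_fls_subdegree)
  finally have "fls_subdegree N \<ge> 1" using dsd by simp
  moreover have "fls_subdegree N \<le> 0"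
  proof -
    have pz: "p * p - monom 1 k * p * q - q * q \<noteq> 0" using Nne unfolding N_def by (metis poly_fls_0)
    show ?thesis unfolding N_def poly_fls_subdegree[OF pz] by simp
  qed
  ultimately show False by simp
qed

lemma irr: "\<alpha> \<notin> rat_funs"
proof
  assume "\<alpha> \<in> rat_funs"
  then obtain a b where b: "b \<noteq> 0" and a: "\<alpha> = poly_fls a / poly_fls b"
    unfolding rat_funs_def by blast
  define n where "n = degree b"
  have rn: "r n = poly_fls (qs k (Suc n)) / poly_fls (qs k n)" by (simp add: r_def Q_def)
  have "\<alpha> \<noteq> r n" using r_diff_ne by simp
  then have "fls_subdegree (\<alpha> - r n) \<le> int (degree b) + int (degree (qs k n))"
    unfolding rn by (rule rat_bound[OF b conjunct1[OF qs_deg[OF k]] a])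
  then have "int ((2 * n + 1) * k) \<le> int n + int (n * k)"
    using r_sd qs_deg[OF k, of n] by (simp add: n_def)
  then have "(2 * n + 1) * k \<le> n + n * k" by linarith
  moreover have "n + n * k < (2 * n + 1) * k"
  proof -
    have e: "(2 * n + 1) * k = n * k + n * k + k" by (simp add: algebra_simps)
    have "n \<le> n * k" using k by simp
    then show ?thesis unfolding e using k by linarith
  qed
  ultimately show False by simp
qed

lemma lag_eq: "lag \<alpha> = ereal (of_int (int k))"
proof -
  have K: "infinite (RR \<alpha> j) \<longleftrightarrow> j \<le> int k" for j
  proof
    assume inf: "infinite (RR \<alpha> j)"
    show "j \<le> int k"
    proof (rule ccontr)
      assume "\<not> j \<le> int k"
      then have "RR \<alpha> j \<subseteq> RR \<alpha> (int k + 1)" by (intro RR_mono) simp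
      then show False using inf RR_k1_empty by auto
    qed
  next
    assume "j \<le> int k"
    then show "infinite (RR \<alpha> j)" using RR_mono RR_k_infinite infinite_super by metis
  qed
  show ?thesis unfolding lag_RR K
  proof (rule antisym)
    show "Sup {ereal (of_int j) |j. j \<le> int k} \<le> ereal (of_int (int k))"
      by (rule Sup_least) auto
    show "ereal (of_int (int k)) \<le> Sup {ereal (of_int j) |j. j \<le> int k}"
      by (intro Sup_upper CollectI exI[of _ "int k"]) simp
  qed
qed

end

lemma spec_k:
  fixes k :: int assumes "k \<ge> 1"
  shows "ereal (of_int k) \<in> lagrange_spectrum"
proof -
  have k: "nat k \<ge> 1" using assms by simp
  obtain \<alpha> :: "rat fls" where a: "\<alpha> \<noteq> 0" "\<alpha> * \<alpha> = fls_X_inv ^ nat k * \<alpha> + 1" "fls_subdegree \<alpha> = - int (nat k)"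
    using alpha_exists[OF k] by blast
  have "alpha_k (nat k) \<alpha>" using k a by (simp add: alpha_k_def)
  then interpret alpha_k "nat k" \<alpha> .
  have "lag \<alpha> = ereal (of_int k)" using lag_eq assms by simp
  then show ?thesis unfolding lagrange_spectrum_def mem_Collect_eq
    by (intro exI[of _ \<alpha>]) (use irr in simp)
qed




definition Einf :: "int set" where "Einf = range (\<lambda>i::nat. int (3 ^ i))"

definition ainf :: "rat fls" where
  "ainf = Abs_fls (\<lambda>n. if n \<in> Einf then 1 else 0)"

lemma ainf_nth: "ainf $$ n = (if n \<in> Einf then 1 else 0)"
proof -
  have "\<forall>\<^sub>\<infinity>m::nat. (if - int m \<in> Einf then 1 else 0 :: rat) = 0"
  proof (rule always_eventually, rule allI)
    fix m :: nat
    have "- int m \<notin> Einf" unfolding Einf_def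
    proof
      assume "- int m \<in> range (\<lambda>i::nat. int (3 ^ i))"
      then obtain i where "- int m = int (3 ^ i)" by blast
      moreover have "(3::nat) ^ i > 0" by simp
      ultimately show False by linarith
    qed
    then show "(if - int m \<in> Einf then 1 else 0 :: rat) = 0" by simp
  qed
  then show ?thesis unfolding ainf_def by simp
qed

lemma pow3_notin: "int (3 ^ Suc j) \<notin> (\<lambda>i::nat. int (3 ^ i)) ` {..j}"
proof
  assume "int (3 ^ Suc j) \<in> (\<lambda>i::nat. int (3 ^ i)) ` {..j}"
  then obtain i where i: "i \<le> j" "int (3 ^ Suc j) = int (3 ^ i)" by blast
  then have e: "(3::nat) ^ Suc j = 3 ^ i" by (simp only: of_nat_eq_iff)
  have "(3::nat) ^ i < 3 ^ Suc j" using i(1) by (intro power_strict_increasing) auto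
  then show False unfolding e by simp
qed

definition Sj :: "nat \<Rightarrow> rat fls" where "Sj j = (\<Sum>i\<le>j. fls_X ^ (3 ^ i))"

lemma Sj_nth: "Sj j $$ n = (if n \<in> (\<lambda>i::nat. int (3 ^ i)) ` {..j} then 1 else 0)"
proof (induction j)
  case 0 then show ?case by (simp add: Sj_def)
next
  case (Suc j)
  note notin = pow3_notin[of j]
  have "Sj (Suc j) = Sj j + fls_X ^ (3 ^ Suc j)" by (simp add: Sj_def)
  then have "Sj (Suc j) $$ n = Sj j $$ n + (if n = int (3 ^ Suc j) then 1 else 0)" by simp
  also have "\<dots> = (if n \<in> (\<lambda>i::nat. int (3 ^ i)) ` {..Suc j} then 1 else 0)"
    using notin unfolding Suc by (auto simp: atMost_Suc)
  finally show ?case .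
qed

lemma ainf_diff_sd: "ainf - Sj j \<noteq> 0 \<and> fls_subdegree (ainf - Sj j) = int (3 ^ Suc j)"
proof -
  have at: "(ainf - Sj j) $$ int (3 ^ Suc j) = 1"
  proof -
    have "int (3 ^ Suc j) \<in> Einf" unfolding Einf_def by blast
    moreover note pow3_notin[of j]
    ultimately show ?thesis by (simp add: ainf_nth Sj_nth)
  qed
  have below: "(ainf - Sj j) $$ n = 0" if "n < int (3 ^ Suc j)" for n
  proof (cases "n \<in> Einf")
    case True
    then obtain i where i: "n = int (3 ^ i)" unfolding Einf_def by blast
    have "int ((3::nat) ^ i) < int (3 ^ Suc j)" using that i by simp
    then have lt: "(3::nat) ^ i < 3 ^ Suc j" by (simp only: of_nat_less_iff)
    have one3: "(1::nat) < 3" by simp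
    have "i < Suc j" by (rule power_less_imp_less_exp[OF one3 lt])
    then have "n \<in> (\<lambda>i::nat. int (3 ^ i)) ` {..j}" using i by auto
    then show ?thesis using True by (simp add: ainf_nth Sj_nth)
  next
    case False
    then have "n \<notin> (\<lambda>i::nat. int (3 ^ i)) ` {..j}" unfolding Einf_def by auto
    then show ?thesis using False by (simp add: ainf_nth Sj_nth)
  qed
  have "fls_subdegree (ainf - Sj j) = int (3 ^ Suc j)"
    by (rule fls_subdegree_eqI) (use at below in auto)
  moreover have "ainf - Sj j \<noteq> 0" using at by (metis fls_zero_nth one_neq_zero)
  ultimately show ?thesis by simp
qed

lemma X_Xinv_pow: "a \<le> b \<Longrightarrow> fls_X ^ a * fls_X_inv ^ b = (fls_X_inv ^ (b - a) :: rat fls)"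
proof -
  assume "a \<le> b"
  then have "fls_X_inv ^ b = (fls_X_inv ^ a * fls_X_inv ^ (b - a) :: rat fls)"
    by (simp add: power_add[symmetric])
  moreover have "fls_X ^ a * fls_X_inv ^ a = (1 :: rat fls)"
  proof -
    have XX: "fls_X * fls_X_inv = (1::rat fls)" using fls_X_inv_X by (simp add: mult.commute)
    show ?thesis by (simp add: power_mult_distrib[symmetric] XX)
  qed
  ultimately show ?thesis by (metis mult.assoc mult_1)
qed

lemma Sj_rat: "Sj j = poly_fls (\<Sum>i\<le>j. monom 1 (3 ^ j - 3 ^ i)) / poly_fls (monom 1 (3 ^ j))"
proof -
  have "poly_fls (\<Sum>i\<le>j. monom 1 (3 ^ j - 3 ^ i)) = (\<Sum>i\<le>j. fls_X_inv ^ (3 ^ j - 3 ^ i))"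
    by (simp add: poly_fls_sum poly_fls_monom1)
  also have "\<dots> = (\<Sum>i\<le>j. fls_X ^ (3 ^ i) * fls_X_inv ^ (3 ^ j))"
    by (rule sum.cong) (auto intro!: X_Xinv_pow[symmetric] power_increasing)
  also have "\<dots> = Sj j * fls_X_inv ^ (3 ^ j)" by (simp add: Sj_def sum_distrib_right)
  finally have F: "poly_fls (\<Sum>i\<le>j. monom 1 (3 ^ j - 3 ^ i)) = Sj j * fls_X_inv ^ (3 ^ j)" .
  have XI: "fls_X_inv ^ (3 ^ j) \<noteq> (0::rat fls)" by simp
  show ?thesis unfolding F poly_fls_monom1 by (rule nonzero_mult_div_cancel_right[OF XI, symmetric])
qed

lemma ainf_RR: "infinite (RR ainf k)"
proof -
  define N where "N = nat k"
  define r where "r = (\<lambda>j. Sj (j + N))"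
  have inj: "inj r"
  proof
    fix m n assume "r m = r n"
    then have "int (3 ^ Suc (m + N)) = int (3 ^ Suc (n + N))" using ainf_diff_sd unfolding r_def by metis
    then show "m = n" by (simp add: power_inject_exp)
  qed
  have "r j \<in> RR ainf k" for j
  proof -
    define q :: "rat poly" where "q = monom 1 (3 ^ (j + N))"
    have dq: "degree q = 3 ^ (j + N)" "q \<noteq> 0" by (simp_all add: q_def degree_monom_eq)
    have "int N \<le> int (3 ^ (j + N))"
    proof -
      have "j + N < 2 ^ (j + N)" by (rule less_exp)
      also have "(2::nat) ^ (j + N) \<le> 3 ^ (j + N)" by (rule power_mono) auto
      finally show ?thesis by simp
    qed
    then have kle: "k \<le> int (3 ^ (j + N))" unfolding N_def by linarith
    have "ldeg (ainf - r j) = - int (3 ^ Suc (j + N))"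
      using ainf_diff_sd by (simp add: ldeg_def r_def)
    also have "\<dots> \<le> - 2 * int (degree q) - k" using kle dq by simp
    finally have le: "ldeg (ainf - r j) \<le> - 2 * int (degree q) - k" .
    show ?thesis unfolding RR_def mem_Collect_eq
      by (intro exI[of _ "\<Sum>i\<le>j + N. monom 1 (3 ^ (j + N) - 3 ^ i)"] exI[of _ q])
        (use le dq in \<open>simp add: r_def Sj_rat q_def\<close>)
  qed
  then show ?thesis using range_inj_infinite[OF inj] infinite_super by (metis image_subsetI)
qed

lemma ainf_irr: "ainf \<notin> rat_funs"
proof
  assume "ainf \<in> rat_funs"
  then obtain a b where b: "b \<noteq> 0" and a: "ainf = poly_fls a / poly_fls b"
    unfolding rat_funs_def by blast
  have "RR ainf (int (degree b) + 1) = {}" by (rule rat_RR_empty[OF b a]) simp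
  then show False using ainf_RR by (metis finite.emptyI)
qed

lemma ainf_lag: "lag ainf = \<infinity>"
proof -
  have "{ereal (of_int k) | k::int. infinite (RR ainf k)} = (\<lambda>k. ereal (of_int k)) ` UNIV"
    using ainf_RR by auto
  moreover have "(SUP k\<in>UNIV. ereal (of_int k)) = \<infinity>"
  proof (rule SUP_PInfty)
    fix n :: nat show "\<exists>i\<in>UNIV. ereal (real n) \<le> ereal (of_int i)"
      by (rule bexI[of _ "int n"]) auto
  qed
  ultimately show ?thesis unfolding lag_RR by simp
qed

lemma LHS_eq: "lagrange_spectrum = Sset"
proof
  show "lagrange_spectrum \<subseteq> Sset"
    unfolding lagrange_spectrum_def using lag_irr by auto
next
  show "Sset \<subseteq> lagrange_spectrum"
  proof
    fix x assume "x \<in> Sset"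
    then consider k where "k \<ge> 1" "x = ereal (of_int k)" | "x = \<infinity>" unfolding Sset_def by blast
    then show "x \<in> lagrange_spectrum"
    proof cases
      case 1 then show ?thesis using spec_k by simp
    next
      case 2 then show ?thesis unfolding lagrange_spectrum_def using ainf_irr ainf_lag by force
    qed
  qed
qed

theorem theorem9:
  shows "lagrange_spectrum = {Lval A | A :: int \<Rightarrow> rat poly. \<forall>i. degree (A i) \<ge> 1}"
  unfolding LHS_eq RHS_eq ..



end
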